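(* Let $L, e_i, e_j, e_h, e_w, e_v$ be mutually independent random variables, where $L, e_i, e_j, e_h, e_w$ are mean-zero Gaussian. For constants $a_i, a_j, a_h, a_w$ define $X_m = a_m L + e_m$ for $m \in \{i,j,h,w\}$. Let $f$ be a measurable function such that $V_i = f(X_i, e_v)$ has finite second moment. Then the tetrad constraints hold among $V_i, X_j, X_h, X_w$ for every partition into pairs: $$\mathrm{Cov}(V_i,X_j)\,\mathrm{Cov}(X_h,X_w) = \mathrm{Cov}(V_i,X_h)\,\mathrm{Cov}(X_j,X_w) = \mathrm{Cov}(V_i,X_w)\,\mathrm{Cov}(X_j,X_h).$$ In particular this holds when $X_i$ is standard Gaussian and $V_i$ is the binary variable with $V_i = 1$ if $X_i \ge S_i$ and $V_i = 0$ otherwise, for a constant $S_i$.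
   Context: This describes a pure 1-factor measurement model with a single latent common cause $L$ of the linear Gaussian indicators $X_i, X_j, X_h, X_w$, in which the indicator $X_i$ is replaced by a (possibly non-Gaussian, e.g. binary) variable $V_i$ that is a function of $X_i$ and an independent noise term $e_v$. *)

theory Defs
  imports "HOL-Probability.Probability"
begin

definition cov :: "'a measure \<Rightarrow> ('a \<Rightarrow> real) \<Rightarrow> ('a \<Rightarrow> real) \<Rightarrow> real" where
  "cov M X Y = (\<integral>\<omega>. (X \<omega> - (\<integral>\<eta>. X \<eta> \<partial>M)) * (Y \<omega> - (\<integral>\<eta>. Y \<eta> \<partial>M)) \<partial>M)"

definition centered_gaussian :: "'a measure \<Rightarrow> ('a \<Rightarrow> real) \<Rightarrow> bool" where
  "centered_gaussian M X \<longleftrightarrow> (\<exists>\<sigma>>0. distributed M lborel X (normal_density 0 \<sigma>))"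

definition tetrads :: "'a measure \<Rightarrow> ('a \<Rightarrow> real) \<Rightarrow> ('a \<Rightarrow> real) \<Rightarrow> ('a \<Rightarrow> real) \<Rightarrow> ('a \<Rightarrow> real) \<Rightarrow> bool" where
  "tetrads M V Xj Xh Xw \<longleftrightarrow>
     cov M V Xj * cov M Xh Xw = cov M V Xh * cov M Xj Xw \<and>
     cov M V Xh * cov M Xj Xw = cov M V Xw * cov M Xj Xh"

end

theory Submission
  imports Defs
begin

context prob_space begin

lemma gauss_facts:
  assumes "centered_gaussian M X"
  shows "X \<in> borel_measurable M" "integrable M X" "integrable M (\<lambda>\<omega>. (X \<omega>)\<^sup>2)" "expectation X = 0"
proof -
  obtain \<sigma> where s: "\<sigma> > 0" and D: "distributed M lborel X (normal_density 0 \<sigma>)"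
    using assms unfolding centered_gaussian_def by blast
  show m: "X \<in> borel_measurable M"
    using distributed_measurable[OF D] by simp
  show "integrable M X"
    by (subst distributed_integrable[OF D, of "\<lambda>x. x", symmetric]) (auto intro: integrable_normal_moment_nz_1 s)
  show "integrable M (\<lambda>\<omega>. (X \<omega>)\<^sup>2)"
    using distributed_integrable[OF D, of "\<lambda>x. x^2"] integrable_normal_moment[OF s, of 0 2] by simp
  show "expectation X = 0"
    using normal_distributed_expectation[OF s D] .
qed

lemma indep_single:
  assumes ind: "indep_vars (\<lambda>_. borel) Y I"
    and h: "h \<in> borel_measurable (PiM A (\<lambda>_. borel))" and A: "A \<subseteq> I" and m: "m \<in> I" "m \<notin> A"
  shows "indep_var borel (\<lambda>\<omega>. h (restrict (\<lambda>i. Y i \<omega>) A)) borel (Y m)"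
proof -
  have "indep_var (PiM A (\<lambda>_. borel)) (\<lambda>\<omega>. restrict (\<lambda>i. Y i \<omega>) A)
          (PiM {m} (\<lambda>_. borel)) (\<lambda>\<omega>. restrict (\<lambda>i. Y i \<omega>) {m})"
    by (rule indep_var_restrict[OF ind]) (use A m in auto)
  then have "indep_var borel (h \<circ> (\<lambda>\<omega>. restrict (\<lambda>i. Y i \<omega>) A))
          borel ((\<lambda>x. x m) \<circ> (\<lambda>\<omega>. restrict (\<lambda>i. Y i \<omega>) {m}))"
    by (rule indep_var_compose) (use h in auto)
  then show ?thesis by (simp add: comp_def)
qed

lemma indep_pair:
  assumes ind: "indep_vars (\<lambda>_. borel) Y I" and "p \<in> I" "m \<in> I" "p \<noteq> m"
  shows "indep_var borel (Y p) borel (Y m)"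
  using indep_single[OF ind, of "\<lambda>x. x p" "{p}" m] assms by (simp add: restrict_def)

lemma cov_VL:
  fixes V L e :: "'a \<Rightarrow> real"
  assumes [measurable]: "V \<in> borel_measurable M" "L \<in> borel_measurable M" "e \<in> borel_measurable M"
   and iV: "integrable M V" and iL: "integrable M L" and ie: "integrable M e"
   and iVL: "integrable M (\<lambda>\<omega>. V \<omega> * L \<omega>)" and iVe: "integrable M (\<lambda>\<omega>. V \<omega> * e \<omega>)"
   and EL: "expectation L = 0" and Ee: "expectation e = 0"
   and EVe: "expectation (\<lambda>\<omega>. V \<omega> * e \<omega>) = 0"
  shows "cov M V (\<lambda>\<omega>. a * L \<omega> + e \<omega>) = a * expectation (\<lambda>\<omega>. V \<omega> * L \<omega>)"
proof -
  define mV where "mV = expectation V"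
  have E0: "expectation (\<lambda>\<omega>. a * L \<omega> + e \<omega>) = 0"
    using iL ie EL Ee by simp
  have eq: "(\<lambda>\<omega>. (V \<omega> - mV) * (a * L \<omega> + e \<omega> - 0)) =
     (\<lambda>\<omega>. (a * (V \<omega> * L \<omega>) + V \<omega> * e \<omega>) - (mV * a * L \<omega> + mV * e \<omega>))"
    by (auto simp: algebra_simps)
  have "cov M V (\<lambda>\<omega>. a * L \<omega> + e \<omega>) = expectation (\<lambda>\<omega>. (a * (V \<omega> * L \<omega>) + V \<omega> * e \<omega>) - (mV * a * L \<omega> + mV * e \<omega>))"
    unfolding cov_def E0 mV_def[symmetric] eq ..
  also have "\<dots> = a * expectation (\<lambda>\<omega>. V \<omega> * L \<omega>)"
    using iVL iVe iL ie EL Ee EVe by simp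
  finally show ?thesis .
qed

lemma cov_XX:
  fixes L e1 e2 :: "'a \<Rightarrow> real"
  assumes iL: "integrable M L" and ie1: "integrable M e1" and ie2: "integrable M e2"
   and iLL: "integrable M (\<lambda>\<omega>. (L \<omega>)\<^sup>2)"
   and i1: "integrable M (\<lambda>\<omega>. L \<omega> * e2 \<omega>)" and i2: "integrable M (\<lambda>\<omega>. e1 \<omega> * L \<omega>)"
   and i3: "integrable M (\<lambda>\<omega>. e1 \<omega> * e2 \<omega>)"
   and EL: "expectation L = 0" and E1: "expectation e1 = 0" and E2: "expectation e2 = 0"
   and z1: "expectation (\<lambda>\<omega>. L \<omega> * e2 \<omega>) = 0" and z2: "expectation (\<lambda>\<omega>. e1 \<omega> * L \<omega>) = 0"
   and z3: "expectation (\<lambda>\<omega>. e1 \<omega> * e2 \<omega>) = 0"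
  shows "cov M (\<lambda>\<omega>. a * L \<omega> + e1 \<omega>) (\<lambda>\<omega>. b * L \<omega> + e2 \<omega>) = a * b * expectation (\<lambda>\<omega>. (L \<omega>)\<^sup>2)"
proof -
  have Ea: "expectation (\<lambda>\<omega>. a * L \<omega> + e1 \<omega>) = 0" using iL ie1 EL E1 by simp
  have Eb: "expectation (\<lambda>\<omega>. b * L \<omega> + e2 \<omega>) = 0" using iL ie2 EL E2 by simp
  have eq: "(\<lambda>\<omega>. (a * L \<omega> + e1 \<omega> - 0) * (b * L \<omega> + e2 \<omega> - 0)) =
     (\<lambda>\<omega>. a * b * (L \<omega>)\<^sup>2 + a * (L \<omega> * e2 \<omega>) + b * (e1 \<omega> * L \<omega>) + e1 \<omega> * e2 \<omega>)"
    by (auto simp: algebra_simps power2_eq_square)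
  show ?thesis
    unfolding cov_def Ea Eb eq using iLL i1 i2 i3 z1 z2 z3 by simp
qed

lemma abs_mult_le_sq: "\<bar>(a::real) * b\<bar> \<le> a\<^sup>2 + b\<^sup>2"
proof -
  have "0 \<le> (\<bar>a\<bar> - \<bar>b\<bar>)\<^sup>2" by simp
  then have "2 * (\<bar>a\<bar> * \<bar>b\<bar>) \<le> \<bar>a\<bar>\<^sup>2 + \<bar>b\<bar>\<^sup>2" by (simp add: power2_eq_square algebra_simps)
  moreover have "\<bar>a\<bar> * \<bar>b\<bar> \<ge> 0" by simp
  moreover have "\<bar>a * b\<bar> = \<bar>a\<bar> * \<bar>b\<bar>" by (simp add: abs_mult)
  moreover have "\<bar>a\<bar>\<^sup>2 = a\<^sup>2" "\<bar>b\<bar>\<^sup>2 = b\<^sup>2" by simp_all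
  ultimately show ?thesis by linarith
qed

lemma tetrad_gen:
  fixes L ei ej eh ew ev V :: "'a \<Rightarrow> real"
  assumes indep: "indep_vars (\<lambda>_. borel) (\<lambda>k. [L, ei, ej, eh, ew, ev] ! k) {0..<6}"
    and gL: "centered_gaussian M L"
    and gj: "centered_gaussian M ej"
    and gh: "centered_gaussian M eh"
    and gw: "centered_gaussian M ew"
    and h: "h \<in> borel_measurable (PiM {0,1,5} (\<lambda>_. borel))"
    and V_def: "V = (\<lambda>\<omega>. h (restrict (\<lambda>i. ([L, ei, ej, eh, ew, ev] ! i) \<omega>) {0,1,5}))"
    and V2: "integrable M (\<lambda>\<omega>. (V \<omega>)\<^sup>2)"
  shows "tetrads M V (\<lambda>\<omega>. aj * L \<omega> + ej \<omega>) (\<lambda>\<omega>. ah * L \<omega> + eh \<omega>) (\<lambda>\<omega>. aw * L \<omega> + ew \<omega>)"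
proof -
  let ?Y = "\<lambda>k. [L, ei, ej, eh, ew, ev] ! k"
  note fL = gauss_facts[OF gL] and fj = gauss_facts[OF gj] and fh = gauss_facts[OF gh] and fw = gauss_facts[OF gw]
  have Ym: "\<And>i. i \<in> {0..<6} \<Longrightarrow> ?Y i \<in> borel_measurable M"
    using indep unfolding indep_vars_def by auto
  have "(\<lambda>\<omega>. restrict (\<lambda>i. ?Y i \<omega>) {0,1,5}) \<in> measurable M (PiM {0,1,5} (\<lambda>_. borel))"
    by (rule measurable_restrict) (use Ym[of 0] Ym[of 1] Ym[of 5] in auto)
  then have Vm: "V \<in> borel_measurable M"
    unfolding V_def using h by (rule measurable_compose)
  have iV: "integrable M V" by (rule square_integrable_imp_integrable[OF Vm V2])
  have iVL: "integrable M (\<lambda>\<omega>. V \<omega> * L \<omega>)"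
  proof (rule Bochner_Integration.integrable_bound[where f="\<lambda>\<omega>. (V \<omega>)\<^sup>2 + (L \<omega>)\<^sup>2"])
    show "integrable M (\<lambda>\<omega>. (V \<omega>)\<^sup>2 + (L \<omega>)\<^sup>2)" using V2 fL by simp
    show "(\<lambda>\<omega>. V \<omega> * L \<omega>) \<in> borel_measurable M" using Vm fL by simp
    show "AE x in M. norm (V x * L x) \<le> norm ((V x)\<^sup>2 + (L x)\<^sup>2)"
      using abs_mult_le_sq by auto
  qed
  have indV: "indep_var borel V borel (?Y m)" if "m \<in> {2,3,4}" for m
    unfolding V_def by (rule indep_single[OF indep h]) (use that in auto)
  have indVj: "indep_var borel V borel ej" using indV[of 2] by simp
  have indVh: "indep_var borel V borel eh" using indV[of 3] by simp
  have indVw: "indep_var borel V borel ew" using indV[of 4] by simp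
  have p: "indep_var borel (?Y p) borel (?Y m)" if "p \<in> {0..<6}" "m \<in> {0..<6}" "p \<noteq> m" for p m
    by (rule indep_pair[OF indep that])
  have iLj: "indep_var borel L borel ej" using p[of 0 2] by simp
  have iLh: "indep_var borel L borel eh" using p[of 0 3] by simp
  have iLw: "indep_var borel L borel ew" using p[of 0 4] by simp
  have ijL: "indep_var borel ej borel L" using p[of 2 0] by simp
  have ihL: "indep_var borel eh borel L" using p[of 3 0] by simp
  have ijh: "indep_var borel ej borel eh" using p[of 2 3] by simp
  have ijw: "indep_var borel ej borel ew" using p[of 2 4] by simp
  have ihw: "indep_var borel eh borel ew" using p[of 3 4] by simp
  note II = indep_var_lebesgue_integral indep_var_integrable
  have cVj: "cov M V (\<lambda>\<omega>. aj * L \<omega> + ej \<omega>) = aj * expectation (\<lambda>\<omega>. V \<omega> * L \<omega>)"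
    by (rule cov_VL) (use Vm fL fj iV iVL II[OF indVj] in auto)
  have cVh: "cov M V (\<lambda>\<omega>. ah * L \<omega> + eh \<omega>) = ah * expectation (\<lambda>\<omega>. V \<omega> * L \<omega>)"
    by (rule cov_VL) (use Vm fL fh iV iVL II[OF indVh] in auto)
  have cVw: "cov M V (\<lambda>\<omega>. aw * L \<omega> + ew \<omega>) = aw * expectation (\<lambda>\<omega>. V \<omega> * L \<omega>)"
    by (rule cov_VL) (use Vm fL fw iV iVL II[OF indVw] in auto)
  have chw: "cov M (\<lambda>\<omega>. ah * L \<omega> + eh \<omega>) (\<lambda>\<omega>. aw * L \<omega> + ew \<omega>) = ah * aw * expectation (\<lambda>\<omega>. (L \<omega>)\<^sup>2)"
    by (rule cov_XX) (use fL fh fw II[OF iLw] II[OF ihL] II[OF ihw] in auto)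
  have cjw: "cov M (\<lambda>\<omega>. aj * L \<omega> + ej \<omega>) (\<lambda>\<omega>. aw * L \<omega> + ew \<omega>) = aj * aw * expectation (\<lambda>\<omega>. (L \<omega>)\<^sup>2)"
    by (rule cov_XX) (use fL fj fw II[OF iLw] II[OF ijL] II[OF ijw] in auto)
  have cjh: "cov M (\<lambda>\<omega>. aj * L \<omega> + ej \<omega>) (\<lambda>\<omega>. ah * L \<omega> + eh \<omega>) = aj * ah * expectation (\<lambda>\<omega>. (L \<omega>)\<^sup>2)"
    by (rule cov_XX) (use fL fj fh II[OF iLh] II[OF ijL] II[OF ijh] in auto)
  show ?thesis unfolding tetrads_def cVj cVh cVw chw cjw cjh by (simp add: algebra_simps)
qed

end

theorem mainTheorem1:
  fixes M :: "'a measure"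
    and L ei ej eh ew ev :: "'a \<Rightarrow> real"
    and ai aj ah aw :: real
    and f :: "real \<Rightarrow> real \<Rightarrow> real"
  assumes "prob_space M"
    and indep: "prob_space.indep_vars M (\<lambda>_. borel) (\<lambda>k. [L, ei, ej, eh, ew, ev] ! k) {0..<6}"
    and gL: "centered_gaussian M L"
    and gi: "centered_gaussian M ei"
    and gj: "centered_gaussian M ej"
    and gh: "centered_gaussian M eh"
    and gw: "centered_gaussian M ew"
    and f_meas: "(\<lambda>(x, y). f x y) \<in> borel_measurable (borel \<Otimes>\<^sub>M borel)"
    and V2: "integrable M (\<lambda>\<omega>. (f (ai * L \<omega> + ei \<omega>) (ev \<omega>))\<^sup>2)"
  shows "tetrads M (\<lambda>\<omega>. f (ai * L \<omega> + ei \<omega>) (ev \<omega>))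
            (\<lambda>\<omega>. aj * L \<omega> + ej \<omega>) (\<lambda>\<omega>. ah * L \<omega> + eh \<omega>) (\<lambda>\<omega>. aw * L \<omega> + ew \<omega>)
       \<and> (\<forall>S::real. tetrads M
            (\<lambda>\<omega>. if ai * L \<omega> + ei \<omega> \<ge> S then 1 else 0)
            (\<lambda>\<omega>. aj * L \<omega> + ej \<omega>) (\<lambda>\<omega>. ah * L \<omega> + eh \<omega>) (\<lambda>\<omega>. aw * L \<omega> + ew \<omega>))"
proof -
  interpret prob_space M by fact
  have h1: "(\<lambda>x. f (ai * x 0 + x 1) (x 5)) \<in> borel_measurable (PiM {0,1,5::nat} (\<lambda>_. borel))"
  proof -
    have "(\<lambda>x. (ai * x 0 + x 1, x (5::nat))) \<in> measurable (PiM {0,1,5::nat} (\<lambda>_. borel)) (borel \<Otimes>\<^sub>M borel)"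
      by measurable
    from measurable_compose[OF this f_meas] show ?thesis by simp
  qed
  have A: "tetrads M (\<lambda>\<omega>. f (ai * L \<omega> + ei \<omega>) (ev \<omega>))
            (\<lambda>\<omega>. aj * L \<omega> + ej \<omega>) (\<lambda>\<omega>. ah * L \<omega> + eh \<omega>) (\<lambda>\<omega>. aw * L \<omega> + ew \<omega>)"
    by (rule tetrad_gen[OF indep gL gj gh gw h1]) (use V2 in auto)
  have B: "tetrads M (\<lambda>\<omega>. if ai * L \<omega> + ei \<omega> \<ge> S then 1 else 0)
            (\<lambda>\<omega>. aj * L \<omega> + ej \<omega>) (\<lambda>\<omega>. ah * L \<omega> + eh \<omega>) (\<lambda>\<omega>. aw * L \<omega> + ew \<omega>)" for S
  proof -
    have h2: "(\<lambda>x. if ai * x 0 + x 1 \<ge> S then 1 else (0::real)) \<in> borel_measurable (PiM {0,1,5::nat} (\<lambda>_. borel))"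
      by measurable
    have Lm: "L \<in> borel_measurable M" "ei \<in> borel_measurable M"
      using gauss_facts(1)[OF gL] gauss_facts(1)[OF gi] by auto
    have "integrable M (\<lambda>\<omega>. (if ai * L \<omega> + ei \<omega> \<ge> S then 1 else (0::real))\<^sup>2)"
      by (rule integrable_const_bound[where B=1]) (use Lm in auto)
    then show ?thesis
      by (intro tetrad_gen[OF indep gL gj gh gw h2]) auto
  qed
  show ?thesis using A B by blast
qed

end
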